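(* Let $f$ be analytic on $\mathbb{D}$ with $0<\operatorname{Diam} f(\mathbb{D})<\infty$. Then for all $z,w\in\mathbb{D}$, \[ \frac{|f(z)-f(w)|}{\operatorname{Diam} f(\mathbb{D})}\le \frac{|z-w|}{|1-\bar w z|+\sqrt{(1-|z|^2)(1-|w|^2)}}. \]
   Context: $\mathbb{D}$ is the open unit disk; $\operatorname{Diam}E=\sup_{z,w\in E}|z-w|$. *)

theory Defs
  imports "HOL-Analysis.Analysis"
begin

end

theory Submission
  imports Defs "HOL-Complex_Analysis.Complex_Analysis"
begin

abbreviation Mb :: "complex \<Rightarrow> complex \<Rightarrow> complex" where
  "Mb a \<equiv> Moebius_function 0 a"

lemma Mb_ball: "norm a < 1 \<Longrightarrow> Mb a ` ball 0 1 \<subseteq> ball 0 1"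
  using Moebius_function_norm_lt_1 by auto

lemma Schwarz_Pick:
  assumes hk: "k holomorphic_on ball 0 1" and kb: "\<And>u. norm u < 1 \<Longrightarrow> norm (k u) < 1"
    and z: "norm z < 1" and w: "norm w < 1"
  shows "norm (Mb (k w) (k z)) \<le> norm (Mb w z)"
proof -
  define G where "G = Mb (k w) \<circ> (k \<circ> Mb (-w))"
  have w': "norm (-w) < 1" using w by simp
  have kw: "norm (k w) < 1" using kb w by simp
  have kimg: "k ` ball 0 1 \<subseteq> ball 0 1" using kb by auto
  have h1: "(k \<circ> Mb (-w)) holomorphic_on ball 0 1"
    by (rule holomorphic_on_compose_gen[OF Moebius_function_holomorphic[OF w'] hk Mb_ball[OF w']])
  have h2: "G holomorphic_on ball 0 1"
    unfolding G_def
    apply (rule holomorphic_on_compose_gen[OF h1 Moebius_function_holomorphic[OF kw]])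
    using Mb_ball[OF w'] kimg by auto
  have G0: "G 0 = 0" unfolding G_def
    by (simp add: Moebius_function_def)
  have Gb: "\<And>u. norm u < 1 \<Longrightarrow> norm (G u) < 1"
    unfolding G_def using Moebius_function_norm_lt_1 kb kw w' by simp
  have xi: "norm (Mb w z) < 1" using Moebius_function_norm_lt_1 w z by blast
  have "norm (G (Mb w z)) \<le> norm (Mb w z)"
    by (rule Schwarz_Lemma(1)[OF h2 G0 Gb xi])
  moreover have "G (Mb w z) = Mb (k w) (k z)"
    unfolding G_def using Moebius_function_compose[of "-w" w z] w z by simp
  ultimately show ?thesis by simp
qed

lemma alg_ineq:
  fixes x A B C :: real
  assumes "A^2 = B^2 + C^2" "C \<ge> 0" "A > 0" "B > 0" "0 \<le> x" "x < 1"
    "2*x*A \<le> B*(1+x^2)"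
  shows "x \<le> B/(A+C)"
proof -
  have B2: "B^2 \<le> A^2" using assms(1,2) by simp
  have AB: "B \<le> A" by (rule power2_le_imp_le[OF B2]) (use assms(3) in simp)
  have nn: "B*x^2 - 2*A*x + B \<ge> 0" using assms(7) by (simp add: algebra_simps)
  have e1: "(B*x - (A-C))*(B*x-(A+C)) = B*(B*x^2 - 2*A*x) + (A^2 - C^2)"
    by (simp add: algebra_simps power2_eq_square)
  have e2: "A^2 - C^2 = B*B" using assms(1) by (simp add: power2_eq_square)
  have q: "(B*x - (A-C))*(B*x-(A+C)) \<ge> 0"
    unfolding e1 e2 using mult_nonneg_nonneg[OF less_imp_le[OF assms(4)] nn]
    by (simp add: algebra_simps)
  have "B*x < B" using assms(4,6) by simp
  hence lt: "B*x - (A+C) < 0" using AB assms(2) by linarith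
  have le: "B*x - (A-C) \<le> 0"
  proof (rule ccontr)
    assume "\<not> ?thesis"
    hence "(B*x - (A-C))*(B*x-(A+C)) < 0" using lt by (simp add: mult_pos_neg)
    thus False using q by linarith
  qed
  have ACp: "A + C > 0" using assms(2,3) by simp
  have "B*x*(A+C) \<le> (A-C)*(A+C)"
    using mult_right_mono[OF _ less_imp_le[OF ACp], of "B*x" "A-C"] le by simp
  also have "\<dots> = B*B" using e2 by (simp add: algebra_simps power2_eq_square)
  finally have "B*(x*(A+C)) \<le> B*B" by (simp add: mult.assoc)
  hence "x*(A+C) \<le> B" using assms(4) by simp
  thus ?thesis using ACp by (simp add: pos_le_divide_eq)
qed

lemma norm_ident:
  fixes z w :: complex
  shows "(cmod (1 - cnj w * z))^2 = (cmod (z - w))^2 + (1 - (cmod z)^2) * (1 - (cmod w)^2)"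
  unfolding cmod_power2 by (simp add: power2_eq_square algebra_simps)

theorem mainTheorem10:
  fixes f :: "complex \<Rightarrow> complex" and z w :: complex
  assumes "f holomorphic_on ball 0 1"
    and "bounded (f ` ball 0 1)"
    and "diameter (f ` ball 0 1) > 0"
    and "z \<in> ball 0 1" and "w \<in> ball 0 1"
  shows "cmod (f z - f w) / diameter (f ` ball 0 1)
         \<le> cmod (z - w) / (cmod (1 - cnj w * z) + sqrt ((1 - (cmod z)\<^sup>2) * (1 - (cmod w)\<^sup>2)))"
proof (cases "f z = f w")
  case True
  have "0 \<le> (1 - (cmod z)^2) * (1 - (cmod w)^2)" using assms(4,5)
    by (intro mult_nonneg_nonneg) (auto simp: power_le_one)
  then show ?thesis using True by (simp add: add_nonneg_nonneg)
next
  case False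
  define D where "D = diameter (f ` ball 0 1)"
  have D: "D > 0" using assms(3) D_def by simp
  have z1: "norm z < 1" and w1: "norm w < 1" using assms(4,5) by auto
  have zw: "z \<noteq> w" using False by auto
  have fb: "cmod (f a - f b) \<le> D" if "a \<in> ball 0 1" "b \<in> ball 0 1" for a b
    using diameter_bounded_bound[OF assms(2), of "f a" "f b"] that D_def by (simp add: dist_norm)
  define z' where "z' = Mb w z"
  have z'1: "norm z' < 1" unfolding z'_def using Moebius_function_norm_lt_1 z1 w1 by blast
  have mw: "norm (-w) < 1" using w1 by simp
  define \<tau> where "\<tau> = (\<lambda>u. Mb (-w) (- Mb z' (Mb w u)))"
  have \<tau>b: "\<tau> u \<in> ball 0 1" if "u \<in> ball 0 1" for u
  proof -
    have "norm (Mb w u) < 1" using Moebius_function_norm_lt_1 w1 that by simp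
    hence "norm (- Mb z' (Mb w u)) < 1" using Moebius_function_norm_lt_1 z'1 by simp
    thus ?thesis unfolding \<tau>_def using Moebius_function_norm_lt_1 mw by simp
  qed
  have h\<tau>: "\<tau> holomorphic_on ball 0 1"
  proof -
    have "(\<lambda>u. - Mb z' (Mb w u)) holomorphic_on ball 0 1"
      apply (rule holomorphic_on_minus)
      apply (rule holomorphic_on_compose_gen[OF Moebius_function_holomorphic[OF w1]
            Moebius_function_holomorphic[OF z'1] Mb_ball[OF w1], unfolded o_def])
      done
    moreover have "(\<lambda>u. - Mb z' (Mb w u)) ` ball 0 1 \<subseteq> ball 0 1"
      using Moebius_function_norm_lt_1 z'1 w1 by auto
    ultimately show ?thesis unfolding \<tau>_def
      using holomorphic_on_compose_gen[OF _ Moebius_function_holomorphic[OF mw], of "\<lambda>u. - Mb z' (Mb w u)"]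
      by (simp add: o_def)
  qed
  have zz: "Mb (-w) z' = z" unfolding z'_def using Moebius_function_compose[of "-w" w z] z1 w1 by simp
  have \<tau>w: "\<tau> w = z"
    unfolding \<tau>_def using zz by (simp add: Moebius_function_eq_zero Moebius_function_of_zero)
  have \<tau>z: "\<tau> z = w"
    unfolding \<tau>_def z'_def[symmetric] by (simp add: Moebius_function_eq_zero Moebius_function_of_zero)
  define k where "k = (\<lambda>u. (f u - f (\<tau> u)) / D)"
  have hk: "k holomorphic_on ball 0 1"
    unfolding k_def
    by (intro holomorphic_intros assms(1) holomorphic_on_compose_gen[OF h\<tau> assms(1), unfolded o_def])
       (use \<tau>b D in auto)
  have kle: "norm (k u) \<le> 1" if "u \<in> ball 0 1" for u
    using fb[OF that \<tau>b[OF that]] D by (simp add: k_def norm_divide)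
  define X where "X = k z"
  have kw: "k w = - X" unfolding X_def k_def using \<tau>w \<tau>z by (simp add: minus_divide_left)
  have X0: "X \<noteq> 0" unfolding X_def k_def using \<tau>z False D by simp
  have klt: "norm (k u) < 1" if "norm u < 1" for u
  proof (rule ccontr)
    assume "\<not> ?thesis"
    moreover have ub: "u \<in> ball 0 1" using that by simp
    ultimately have "norm (k u) = 1" using kle[OF ub] by linarith
    hence "k constant_on ball 0 1"
      by (intro maximum_modulus_principle[OF hk _ _ _ order_refl ub]) (auto simp: kle)
    hence "k z = k w" using z1 w1 unfolding constant_on_def by auto
    thus False using kw X0 X_def by (simp add: eq_neg_iff_add_eq_0)
  qed
  have SP: "norm (Mb (k w) (k z)) \<le> norm (Mb w z)"
    by (rule Schwarz_Pick[OF hk klt z1 w1])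
  have "cnj X * X = of_real ((cmod X)^2)" using complex_norm_square[of X] by (simp add: mult.commute)
  hence "Mb (k w) (k z) = 2 * X / of_real (1 + (cmod X)^2)"
    unfolding kw X_def[symmetric] by (simp add: Moebius_function_def)
  hence "norm (Mb (k w) (k z)) = norm (2 * X) / norm (complex_of_real (1 + (cmod X)^2))"
    by (simp only: norm_divide)
  also have "norm (complex_of_real (1 + (cmod X)^2)) = 1 + (cmod X)^2"
    by (simp only: norm_of_real) (simp add: add_pos_nonneg)
  finally have L: "norm (Mb (k w) (k z)) = 2 * cmod X / (1 + (cmod X)^2)"
    by (simp add: norm_mult)
  define A where "A = cmod (1 - cnj w * z)"
  define B where "B = cmod (z - w)"
  define C where "C = sqrt ((1 - (cmod z)\<^sup>2) * (1 - (cmod w)\<^sup>2))"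
  have R: "norm (Mb w z) = B / A"
    by (simp add: Moebius_function_def norm_divide A_def B_def)
  have Bp: "B > 0" using zw B_def by simp
  have Cn: "C \<ge> 0" unfolding C_def using z1 w1
    by (intro real_sqrt_ge_zero mult_nonneg_nonneg) (auto simp: abs_square_le_1 power_le_one)
  have C2: "C^2 = (1 - (cmod z)\<^sup>2) * (1 - (cmod w)\<^sup>2)" unfolding C_def using z1 w1
    by (intro real_sqrt_pow2 mult_nonneg_nonneg) (auto simp: power_le_one)
  have ABC: "A^2 = B^2 + C^2" unfolding A_def B_def C2 by (rule norm_ident)
  have Ap: "A > 0"
  proof -
    have "A^2 > 0" using ABC Bp Cn by (simp add: add_pos_nonneg)
    thus ?thesis using A_def by simp
  qed
  have x1: "cmod X < 1" using klt[OF z1] X_def by simp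
  have "2 * cmod X / (1 + (cmod X)^2) \<le> B / A" using SP L R by simp
  hence "2 * cmod X * A \<le> B * (1 + (cmod X)^2)" using Ap
    by (simp add: field_simps add_pos_nonneg)
  hence "cmod X \<le> B / (A + C)"
    by (intro alg_ineq[OF ABC Cn Ap Bp _ x1]) auto
  moreover have "cmod X = cmod (f z - f w) / D" unfolding X_def k_def using \<tau>z D by (simp add: norm_divide)
  ultimately show ?thesis unfolding D_def A_def B_def C_def by simp
qed

end
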